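(* Let $\mathcal A$ be a commutative unital $C^*$-algebra, let $(E,\langle\cdot,\cdot\rangle)$ be a Hilbert $\mathcal A$-module, and let $\{x_i\}_{i\in\mathbb N}$ be a frame for $E$ with bounds $A,B$. Let $\xi\in E$ be such that $\langle\xi,\xi\rangle$ is invertible in $\mathcal A$, and equip $E$ with the standard $\mathcal A$-2-inner product $\langle x,y|z\rangle=\langle x,y\rangle\langle z,z\rangle-\langle x,z\rangle\langle z,y\rangle$. Then there exist real numbers $0<C\le D$ such that for all $x\in E$ $$C\langle x,x|\xi\rangle\le\sum_{i\in\mathbb N}\langle x,x_i|\xi\rangle\langle x_i,x|\xi\rangle\le D\langle x,x|\xi\rangle,$$ i.e. $\{x_i\}$ is an $\mathcal A$-2-frame associated to $\xi$ for this 2-inner product (one may take $D=B\|\langle\xi,\xi\rangle\|$).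
   Context: A Hilbert $\mathcal A$-module is a left $\mathcal A$-module $E$ with an $\mathcal A$-valued inner product $\langle\cdot,\cdot\rangle$ satisfying $\langle x,x\rangle\ge0$, $\langle x,x\rangle=0$ iff $x=0$, $\langle x,y\rangle=\langle y,x\rangle^*$, $\langle ax,by\rangle=a^*\langle x,y\rangle b$, complex-linear in the second variable, and complete for $\|x\|=\|\langle x,x\rangle\|^{1/2}$. A sequence $\{x_j\}_{j\in J}$ in $E$ is a frame for $E$ if there are real numbers $0<A\le B$ with $A\langle x,x\rangle\le\sum_{j}\langle x,x_j\rangle\langle x_j,x\rangle\le B\langle x,x\rangle$ for all $x\in E$ (order of self-adjoint elements of $\mathcal A$, series norm-convergent). *)

theory Defs
  imports Complex_Main
begin

definition cpos :: "('a::ring \<Rightarrow> 'a) \<Rightarrow> 'a \<Rightarrow> bool" where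
  "cpos star a \<longleftrightarrow> (\<exists>b. a = star b * b)"

definition cle :: "('a::ring \<Rightarrow> 'a) \<Rightarrow> 'a \<Rightarrow> 'a \<Rightarrow> bool" where
  "cle star a b \<longleftrightarrow> cpos star (b - a)"

text \<open>A commutative unital complex C*-algebra. The underlying type carries
  the (real) normed algebra structure; complex scalar multiplication is the
  parameter scaleC, compatible with the real one.\<close>

locale comm_unital_cstar_algebra =
  fixes scaleC :: "complex \<Rightarrow> 'a::{comm_ring_1, real_normed_algebra_1, banach} \<Rightarrow> 'a"
    and star :: "'a \<Rightarrow> 'a"
  assumes scaleC_add_left: "scaleC (c + d) a = scaleC c a + scaleC d a"
    and scaleC_add_right: "scaleC c (a + b) = scaleC c a + scaleC c b"
    and scaleC_mult: "scaleC (c * d) a = scaleC c (scaleC d a)"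
    and scaleC_of_real: "scaleC (complex_of_real r) a = r *\<^sub>R a"
    and scaleC_norm: "norm (scaleC c a) = cmod c * norm a"
    and scaleC_left_mult: "scaleC c (a * b) = scaleC c a * b"
    and star_add: "star (a + b) = star a + star b"
    and star_scaleC: "star (scaleC c a) = scaleC (cnj c) (star a)"
    and star_mult: "star (a * b) = star b * star a"
    and star_star: "star (star a) = a"
    and cstar_identity: "norm (star a * a) = norm a ^ 2"

text \<open>The complex scalar multiplication on E is
  c x = (c 1) x (compatibility of the complex and module structures).\<close>

definition hm_norm :: "('m \<Rightarrow> 'm \<Rightarrow> 'a::real_normed_vector) \<Rightarrow> 'm \<Rightarrow> real" where
  "hm_norm ip x = sqrt (norm (ip x x))"

locale hilbert_module = comm_unital_cstar_algebra scaleC star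
  for scaleC :: "complex \<Rightarrow> 'a::{comm_ring_1, real_normed_algebra_1, banach} \<Rightarrow> 'a"
    and star :: "'a \<Rightarrow> 'a" +
  fixes act :: "'a \<Rightarrow> 'm::ab_group_add \<Rightarrow> 'm"
    and ip :: "'m \<Rightarrow> 'm \<Rightarrow> 'a"
  assumes act_add_left: "act (a + b) x = act a x + act b x"
    and act_add_right: "act a (x + y) = act a x + act a y"
    and act_mult: "act (a * b) x = act a (act b x)"
    and act_one: "act 1 x = x"
    and ip_pos: "cpos star (ip x x)"
    and ip_zero: "ip x x = 0 \<longleftrightarrow> x = 0"
    and ip_sym: "ip x y = star (ip y x)"
    and ip_act: "ip (act a x) (act b y) = star a * ip x y * b"
    and ip_add_right: "ip x (y + z) = ip x y + ip x z"
    and ip_scale_right: "ip x (act (scaleC c 1) y) = scaleC c (ip x y)"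
    and complete: "\<And>X::nat \<Rightarrow> 'm.
        (\<forall>e>0. \<exists>N. \<forall>m\<ge>N. \<forall>n\<ge>N. hm_norm ip (X m - X n) < e) \<Longrightarrow>
        (\<exists>L. \<forall>e>0. \<exists>N. \<forall>n\<ge>N. hm_norm ip (X n - L) < e)"

definition is_frame :: "('a::{ring, real_normed_vector} \<Rightarrow> 'a) \<Rightarrow> ('m \<Rightarrow> 'm \<Rightarrow> 'a) \<Rightarrow> (nat \<Rightarrow> 'm) \<Rightarrow> bool" where
  "is_frame star ip xs \<longleftrightarrow> (\<exists>A B::real. 0 < A \<and> A \<le> B \<and>
     (\<forall>x. summable (\<lambda>j. ip x (xs j) * ip (xs j) x) \<and>
          cle star (A *\<^sub>R ip x x) (\<Sum>j. ip x (xs j) * ip (xs j) x) \<and>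
          cle star (\<Sum>j. ip x (xs j) * ip (xs j) x) (B *\<^sub>R ip x x)))"

definition two_ip :: "('m \<Rightarrow> 'm \<Rightarrow> 'a::ring) \<Rightarrow> 'm \<Rightarrow> 'm \<Rightarrow> 'm \<Rightarrow> 'a" where
  "two_ip ip x y z = ip x y * ip z z - ip x z * ip z y"

end

theory Submission
  imports Defs "HOL-Computational_Algebra.Formal_Power_Series"
begin


definition bc :: "nat \<Rightarrow> real" where
  "bc n = (-1)^n * ((1/2::real) gchoose n)"

lemma bc_Suc: "bc (Suc k) = bc k * ((of_nat k - 1/2) / (of_nat k + 1))"
proof -
  have "(1/2::real) * ((1/2) gchoose k) = of_nat k * ((1/2) gchoose k) + of_nat (Suc k) * ((1/2) gchoose (Suc k))"
    by (rule gbinomial_mult_1)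
  hence e: "((1/2::real) gchoose (Suc k)) = (1/2 - of_nat k) * ((1/2) gchoose k) / (of_nat k + 1)"
    by (simp add: field_simps)
  have "bc (Suc k) = (-1)^Suc k * ((1/2 - of_nat k) * ((1/2) gchoose k) / (of_nat k + 1))"
    unfolding bc_def e ..
  also have "\<dots> = bc k * ((of_nat k - 1/2) / (of_nat k + 1))"
    unfolding bc_def by (simp add: field_simps)
  finally show ?thesis .
qed

lemma bc_nonpos: "n \<ge> 1 \<Longrightarrow> bc n \<le> 0"
proof (induction n)
  case 0
  then show ?case by simp
next
  case (Suc n)
  show ?case
  proof (cases "n = 0")
    case True then show ?thesis by (simp add: bc_def)
  next
    case False
    have "(of_nat n - 1/2) / (of_nat n + 1) \<ge> (0::real)" using False by simp
    moreover have "bc n \<le> 0" using Suc False by simp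
    ultimately show ?thesis unfolding bc_Suc[of n] by (metis mult_nonpos_nonneg)
  qed
qed

lemma bc_psum: "(\<Sum>k\<le>m. bc k) \<ge> 0"
proof -
  have "(\<Sum>k\<le>m. bc k) = (\<Sum>k\<le>m. ((1/2::real) gchoose k) * (- 1) ^ k)"
    by (simp add: bc_def mult.commute)
  also have "\<dots> = (-1)^m * ((1/2 - 1) gchoose m)" by (rule gbinomial_sum_lower_neg)
  also have "\<dots> = (-1)^m * ((-1)^m * ((of_nat m - (1/2-1) - 1) gchoose m))"
    by (subst gbinomial_negated_upper) simp
  also have "\<dots> = ((of_nat m - 1/2) gchoose m)"
    by (simp flip: power_mult_distrib)
  also have "\<dots> \<ge> 0"
    unfolding gbinomial_altdef_of_nat by (intro prod_nonneg) (auto simp: of_nat_diff)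
  finally show ?thesis .
qed

lemma bc_abs_summable: "summable (\<lambda>n. \<bar>bc n\<bar>)"
proof (rule summableI_nonneg_bounded[where x=2])
  fix n
  show "(\<Sum>i<n. \<bar>bc i\<bar>) \<le> 2"
  proof (cases n)
    case 0 then show ?thesis by simp
  next
    case (Suc m)
    have "\<And>i. \<bar>bc i\<bar> = (if i = 0 then 2 else 0) - bc i"
      using bc_nonpos by (auto simp: bc_def)
    hence "(\<Sum>i<n. \<bar>bc i\<bar>) = (\<Sum>i<n. (if i = 0 then 2 else 0)) - (\<Sum>i<n. bc i)"
      by (simp add: sum_subtractf)
    also have "(\<Sum>i<n. (if i = 0 then 2 else (0::real))) = 2" using Suc by simp
    also have "(\<Sum>i<n. bc i) = (\<Sum>i\<le>m. bc i)" using Suc lessThan_Suc_atMost by simp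
    finally show ?thesis using bc_psum[of m] by simp
  qed
qed simp

lemma bc_conv: "(\<Sum>i\<le>k. bc i * bc (k - i)) = (if k = 0 then 1 else if k = 1 then -1 else 0)"
proof -
  have "(\<Sum>i\<le>k. bc i * bc (k - i)) = (-1)^k * (\<Sum>i\<in>{0..k}. ((1/2::real) gchoose i) * ((1/2) gchoose (k - i)))"
    unfolding bc_def sum_distrib_left atMost_atLeast0
    by (intro sum.cong refl) (auto simp: algebra_simps simp flip: power_add)
  also have "\<dots> = (-1)^k * ((1::real) gchoose k)"
    using gbinomial_Vandermonde[of "1/2::real" "1/2" k] by simp
  also have "\<dots> = (if k = 0 then 1 else if k = 1 then -1 else 0)"
    using binomial_gbinomial[of 1 k, where 'a=real] by (auto simp: binomial_eq_0)
  finally show ?thesis .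
qed


context comm_unital_cstar_algebra
begin

lemma star_zero: "star 0 = 0"
  using star_add[of 0 0] by simp

lemma star_minus: "star (- a) = - star a"
  using star_add[of a "-a"] star_zero by (metis add.right_inverse minus_unique)

lemma star_diff: "star (a - b) = star a - star b"
  using star_add[of a "-b"] star_minus by simp

lemma star_one: "star 1 = 1"
proof -
  have "star (star 1 * 1) = star 1 * star (star 1)" by (rule star_mult)
  thus ?thesis by (simp add: star_star)
qed

lemma star_scaleR: "star (r *\<^sub>R a) = r *\<^sub>R star a"
  using star_scaleC[of "complex_of_real r" a] by (simp add: scaleC_of_real)

lemma star_of_real: "star (of_real r) = of_real r"
  using star_scaleR[of r 1] by (simp add: star_one of_real_def)

lemma norm_star_le: "norm a \<le> norm (star a)"
proof (cases "norm a = 0")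
  case False
  have "norm a ^ 2 = norm (star a * a)" by (simp add: cstar_identity)
  also have "\<dots> \<le> norm (star a) * norm a" by (rule norm_mult_ineq)
  finally have "norm a * norm a \<le> norm (star a) * norm a" by (simp add: power2_eq_square)
  thus ?thesis using False by (simp add: mult_le_cancel_right)
qed simp

lemma norm_star: "norm (star a) = norm a"
  using norm_star_le[of a] norm_star_le[of "star a"] by (simp add: star_star)

lemma bl_star: "bounded_linear star"
  by (rule bounded_linear_intro[where K=1]) (auto simp: star_add star_scaleR norm_star)

lemma star_power: "star (h ^ n) = (star h) ^ n"
  by (induction n) (auto simp: star_one star_mult mult.commute)

definition J where "J = scaleC \<i> 1"

lemma scaleC_conv: "scaleC c a = scaleC c 1 * a"
  using scaleC_left_mult[of c 1 a] by simp

lemma JJ: "J * J = -1"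
proof -
  have "J * J = scaleC \<i> (scaleC \<i> 1)" unfolding J_def by (metis scaleC_conv)
  also have "\<dots> = scaleC (-1) 1" by (simp flip: scaleC_mult)
  also have "\<dots> = -1" using scaleC_of_real[of "-1" 1] by simp
  finally show ?thesis .
qed

lemma star_J: "star J = - J"
proof -
  have "star J = scaleC (-\<i>) 1" unfolding J_def by (simp add: star_scaleC star_one)
  also have "\<dots> = scaleC (-1) (scaleC \<i> 1)" by (simp flip: scaleC_mult)
  also have "\<dots> = - J" using scaleC_of_real[of "-1" "J"] by (simp add: J_def)
  finally show ?thesis .
qed

lemma sqrt_exists:
  assumes sa: "star h = h" and nh: "norm h \<le> 1"
  shows "\<exists>r. star r = r \<and> r * r = 1 - h"
proof -
  define f where "f n = bc n *\<^sub>R h ^ n" for n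
  have nf: "norm (f n) \<le> \<bar>bc n\<bar>" for n
  proof -
    have "norm (f n) = \<bar>bc n\<bar> * norm (h ^ n)" by (simp add: f_def)
    also have "norm (h ^ n) \<le> 1"
      using norm_power_ineq[of h n] power_le_one[OF norm_ge_zero nh, of n] by linarith
    hence "\<bar>bc n\<bar> * norm (h ^ n) \<le> \<bar>bc n\<bar>" by (simp add: mult_left_le)
    finally show ?thesis .
  qed
  have snf: "summable (\<lambda>n. norm (f n))"
    by (rule summable_comparison_test'[OF bc_abs_summable]) (use nf in auto)
  have sf: "summable f" using snf by (rule summable_norm_cancel)
  define r where "r = suminf f"
  have "star r = (\<Sum>n. star (f n))" unfolding r_def by (rule bounded_linear.suminf[OF bl_star sf])
  also have "(\<lambda>n. star (f n)) = f" by (auto simp: f_def star_scaleR star_power sa)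
  finally have s1: "star r = r" by (simp add: r_def)
  have "r * r = (\<Sum>k. \<Sum>i\<le>k. f i * f (k - i))" unfolding r_def by (rule Cauchy_product[OF snf snf])
  also have "(\<lambda>k. \<Sum>i\<le>k. f i * f (k - i)) = (\<lambda>k. (\<Sum>i\<le>k. bc i * bc (k - i)) *\<^sub>R h ^ k)"
  proof
    fix k
    have "(\<Sum>i\<le>k. f i * f (k - i)) = (\<Sum>i\<le>k. (bc i * bc (k - i)) *\<^sub>R h ^ k)"
    proof (rule sum.cong[OF refl])
      fix i assume "i \<in> {..k}"
      hence "h ^ i * h ^ (k - i) = h ^ k" by (simp flip: power_add)
      thus "f i * f (k - i) = (bc i * bc (k - i)) *\<^sub>R h ^ k" by (simp add: f_def)
    qed
    also have "\<dots> = (\<Sum>i\<le>k. bc i * bc (k - i)) *\<^sub>R h ^ k" by (simp add: scaleR_sum_left)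
    finally show "(\<Sum>i\<le>k. f i * f (k - i)) = (\<Sum>i\<le>k. bc i * bc (k - i)) *\<^sub>R h ^ k" .
  qed
  also have "\<dots> = (\<lambda>k. (if k = 0 then 1 else if k = 1 then -1 else 0) *\<^sub>R h ^ k)"
    by (simp add: bc_conv)
  also have "suminf \<dots> = (\<Sum>k\<in>{0,1}. (if k = 0 then 1 else if k = 1 then -1 else 0) *\<^sub>R h ^ k)"
    by (rule suminf_finite) auto
  also have "\<dots> = 1 - h" by simp
  finally show ?thesis using s1 by blast
qed

end


context comm_unital_cstar_algebra
begin

lemma unit_bound:
  assumes "star r = r" "star s = s" "r * r + s * s = 1"
  shows "norm r \<le> 1"
proof -
  define u where "u = r + J * s"
  have su: "star u = r - J * s"
    unfolding u_def by (simp add: star_add star_mult assms star_J mult.commute)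
  have "star u * u = (r - J * s) * (r + J * s)" using su u_def by simp
  also have "\<dots> = r * r - (J * J) * (s * s)" by (simp add: algebra_simps)
  also have "\<dots> = 1" using assms(3) by (simp add: JJ)
  finally have "norm u ^ 2 = 1" using cstar_identity[of u] by simp
  hence nu: "norm u = 1" using norm_ge_zero[of u] by (auto simp: power2_eq_1_iff)
  have "u + star u = 2 *\<^sub>R r" using su u_def by (simp add: scaleR_2)
  hence "r = (1/2) *\<^sub>R (u + star u)" by simp
  hence "norm r \<le> (1/2) * (norm u + norm (star u))"
    by (metis norm_scaleR norm_triangle_ineq abs_of_nonneg le_divide_eq_numeral1(1) mult_left_mono zero_le_divide_1_iff zero_le_numeral)
  thus ?thesis using nu norm_star by simp
qed

lemma sum_squares:
  assumes "star u = u" "star v = v"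
  shows "\<exists>w. star w = w \<and> u * u + v * v = w * w"
proof -
  define c where "c = 1 / (norm u + norm v + 1)"
  have p: "norm u + norm v + 1 > 0" using norm_ge_zero[of u] norm_ge_zero[of v] by linarith
  hence c0: "c > 0" unfolding c_def by simp
  have "norm u / (norm u + norm v + 1) \<le> 1" "norm v / (norm u + norm v + 1) \<le> 1"
    using norm_ge_zero[of u] norm_ge_zero[of v] by (simp_all only: divide_le_eq_1_pos[OF p]; linarith)+
  hence cu: "c * norm u \<le> 1" "c * norm v \<le> 1" unfolding c_def by simp_all
  have sq: "\<exists>t. star t = t \<and> norm t \<le> 1 \<and> t * t = 1 - (c *\<^sub>R a) * (c *\<^sub>R a)"
    if sa: "star a = a" and na: "c * norm a \<le> 1" for a
  proof -
    have n1: "norm (c *\<^sub>R a) \<le> 1" using na c0 by simp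
    have "norm ((c *\<^sub>R a) * (c *\<^sub>R a)) \<le> norm (c *\<^sub>R a) * norm (c *\<^sub>R a)" by (rule norm_mult_ineq)
    also have "\<dots> \<le> 1" using n1 by (simp add: mult_le_one)
    finally have n2: "norm ((c *\<^sub>R a) * (c *\<^sub>R a)) \<le> 1" .
    have s2: "star ((c *\<^sub>R a) * (c *\<^sub>R a)) = (c *\<^sub>R a) * (c *\<^sub>R a)"
      by (simp add: star_mult star_scaleR sa)
    obtain t where t: "star t = t" "t * t = 1 - (c *\<^sub>R a) * (c *\<^sub>R a)"
      using sqrt_exists[OF s2 n2] by blast
    have "norm t \<le> 1"
      by (rule unit_bound[of t "c *\<^sub>R a"]) (use t sa in \<open>auto simp: star_scaleR\<close>)
    thus ?thesis using t by blast
  qed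
  obtain t1 where t1: "star t1 = t1" "norm t1 \<le> 1" "t1 * t1 = 1 - (c *\<^sub>R u) * (c *\<^sub>R u)"
    using sq[OF assms(1) cu(1)] by blast
  obtain t2 where t2: "star t2 = t2" "norm t2 \<le> 1" "t2 * t2 = 1 - (c *\<^sub>R v) * (c *\<^sub>R v)"
    using sq[OF assms(2) cu(2)] by blast
  define h where "h = (1/2) *\<^sub>R (t1 * t1 + t2 * t2)"
  have sh: "star h = h" unfolding h_def by (simp only: star_scaleR star_add star_mult t1(1) t2(1))
  have "norm (t1 * t1) \<le> 1" using norm_mult_ineq[of t1 t1] t1(2) mult_le_one[OF t1(2) norm_ge_zero t1(2)] by linarith
  moreover have "norm (t2 * t2) \<le> 1" using norm_mult_ineq[of t2 t2] t2(2) mult_le_one[OF t2(2) norm_ge_zero t2(2)] by linarith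
  ultimately have nh: "norm h \<le> 1" unfolding h_def
    using norm_triangle_ineq[of "t1 * t1" "t2 * t2"] by simp
  obtain s where s: "star s = s" "s * s = 1 - h" using sqrt_exists[OF sh nh] by blast
  have "(c * c) *\<^sub>R (u * u + v * v) = (c *\<^sub>R u) * (c *\<^sub>R u) + (c *\<^sub>R v) * (c *\<^sub>R v)"
    by (simp add: scaleR_add_right)
  also have "\<dots> = (1 - t1 * t1) + (1 - t2 * t2)" using t1(3) t2(3) by simp
  also have "\<dots> = 2 *\<^sub>R (1 - h)" unfolding h_def
    by (simp add: scaleR_diff_right scaleR_2 algebra_simps)
  finally have e: "(c * c) *\<^sub>R (u * u + v * v) = 2 *\<^sub>R (s * s)" using s by simp
  define w where "w = (sqrt 2 / c) *\<^sub>R s"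
  have "w * w = (2 / (c * c)) *\<^sub>R (s * s)" unfolding w_def by (simp add: field_simps)
  also have "\<dots> = u * u + v * v"
    using arg_cong[OF e, of "\<lambda>z. (1 / (c * c)) *\<^sub>R z"] c0 by (simp add: field_simps)
  finally have "w * w = u * u + v * v" .
  moreover have "star w = w" by (simp add: w_def star_scaleR s(1))
  ultimately show ?thesis by metis
qed

lemma cpos_iff: "cpos star a \<longleftrightarrow> (\<exists>s. star s = s \<and> a = s * s)"
proof
  assume "\<exists>s. star s = s \<and> a = s * s"
  thus "cpos star a" unfolding cpos_def by metis
next
  assume "cpos star a"
  then obtain x where x: "a = star x * x" unfolding cpos_def by blast
  define u where "u = (1/2) *\<^sub>R (x + star x)"
  define v where "v = (1/2) *\<^sub>R (J * (star x - x))"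
  have su: "star u = u" unfolding u_def by (simp add: star_scaleR star_add star_star add.commute)
  have sv: "star v = v" unfolding v_def
    by (simp add: star_scaleR star_mult star_diff star_star star_J algebra_simps)
  have "u * u + v * v = (1/4) *\<^sub>R ((x + star x) * (x + star x) + (J * J) * ((star x - x) * (star x - x)))"
    unfolding u_def v_def by (simp add: algebra_simps scaleR_add_right)
  also have "(x + star x) * (x + star x) + (J * J) * ((star x - x) * (star x - x))
     = star x * x + star x * x + star x * x + star x * x" by (simp add: JJ algebra_simps)
  also have "\<dots> = 4 *\<^sub>R (star x * x)"
    using scaleR_add_left[of 2 2 "star x * x"] by (simp add: scaleR_2)
  also have "(1/4) *\<^sub>R (4 *\<^sub>R (star x * x)) = star x * x" by simp
  finally have "a = u * u + v * v" using x by simp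
  thus "\<exists>s. star s = s \<and> a = s * s" using sum_squares[OF su sv] by metis
qed

lemma cpos_add: "cpos star a \<Longrightarrow> cpos star b \<Longrightarrow> cpos star (a + b)"
  unfolding cpos_iff using sum_squares by metis

lemma cpos_mult: "cpos star a \<Longrightarrow> cpos star b \<Longrightarrow> cpos star (a * b)"
  unfolding cpos_def
proof (elim exE)
  fix x y assume "a = star x * x" "b = star y * y"
  hence "a * b = star (x * y) * (x * y)" by (simp add: star_mult algebra_simps)
  thus "\<exists>z. a * b = star z * z" by blast
qed

lemma cpos_scaleR: "0 \<le> r \<Longrightarrow> cpos star a \<Longrightarrow> cpos star (r *\<^sub>R a)"
  unfolding cpos_def
proof (elim exE)
  fix x assume r: "0 \<le> r" and "a = star x * x"
  hence "r *\<^sub>R a = star (sqrt r *\<^sub>R x) * (sqrt r *\<^sub>R x)" by (simp add: star_scaleR)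
  thus "\<exists>z. r *\<^sub>R a = star z * z" by blast
qed

end


lemma frac_le1: "0 \<le> (a::real) \<Longrightarrow> a / (a + 1) \<le> 1"
  by (simp add: divide_le_eq_1)

context hilbert_module
begin

lemma ip_add_left: "ip (x + y) z = ip x z + ip y z"
  by (metis ip_sym ip_add_right star_add)

lemma ip_diff_left: "ip (x - y) z = ip x z - ip y z"
  using ip_add_left[of "x - y" y z] by (simp add: algebra_simps)

lemma ip_diff_right: "ip z (x - y) = ip z x - ip z y"
  using ip_add_right[of z "x - y" y] by (simp add: algebra_simps)

lemma ip_act_left: "ip (act a x) y = star a * ip x y"
  using ip_act[of a x 1 y] by (simp add: act_one)

lemma ip_act_right: "ip x (act b y) = ip x y * b"
  using ip_act[of 1 x b y] by (simp add: act_one star_one)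

lemma main:
  assumes fr: "is_frame star ip xs" and inv: "ip \<xi> \<xi> * b = 1"
  shows "\<exists>C D::real. 0 < C \<and> C \<le> D \<and>
     (\<forall>x. summable (\<lambda>i. two_ip ip x (xs i) \<xi> * two_ip ip (xs i) x \<xi>) \<and>
          cle star (C *\<^sub>R two_ip ip x x \<xi>) (\<Sum>i. two_ip ip x (xs i) \<xi> * two_ip ip (xs i) x \<xi>) \<and>
          cle star (\<Sum>i. two_ip ip x (xs i) \<xi> * two_ip ip (xs i) x \<xi>) (D *\<^sub>R two_ip ip x x \<xi>))"
proof -
  obtain A B :: real where AB: "0 < A" "A \<le> B"
    and F: "\<And>x. summable (\<lambda>j. ip x (xs j) * ip (xs j) x) \<and>
          cle star (A *\<^sub>R ip x x) (\<Sum>j. ip x (xs j) * ip (xs j) x) \<and>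
          cle star (\<Sum>j. ip x (xs j) * ip (xs j) x) (B *\<^sub>R ip x x)"
    using fr unfolding is_frame_def by blast
  define g where "g = ip \<xi> \<xi>"
  have gb: "g * b = 1" using inv g_def by simp
  have sg: "star g = g" unfolding g_def using ip_sym[of \<xi> \<xi>] by simp
  have sb: "star b = b"
  proof -
    have "star b * g = 1" using arg_cong[OF gb, of star] by (simp add: star_mult sg star_one)
    have "star b = star b * (g * b)" using gb by simp
    also have "\<dots> = (star b * g) * b" by (simp add: mult.assoc)
    also have "\<dots> = b" using \<open>star b * g = 1\<close> by simp
    finally show ?thesis .
  qed
  have gpos: "cpos star g" unfolding g_def by (rule ip_pos)
  then obtain s where s: "g = star s * s" unfolding cpos_def by blast
  have bpos: "cpos star b"
  proof -
    have "b = b * g * b" using gb by (simp add: mult.commute)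
    also have "\<dots> = star (s * b) * (s * b)" using s by (simp add: star_mult sb algebra_simps)
    finally show ?thesis unfolding cpos_def by blast
  qed
  define k where "k = norm b + 1"
  have k: "k \<ge> 1" unfolding k_def by simp
  have low: "cpos star (g - (1/k) *\<^sub>R 1)"
  proof -
    define h where "h = (1/k) *\<^sub>R b"
    have "star h = h" unfolding h_def by (simp add: star_scaleR sb)
    moreover have "norm h \<le> 1" unfolding h_def k_def using frac_le1[OF norm_ge_zero[of b]]
      by simp
    ultimately obtain r where r: "star r = r" "r * r = 1 - h" using sqrt_exists by blast
    have "g - (1/k) *\<^sub>R 1 = g * (r * r)" unfolding r h_def
      by (simp add: right_diff_distrib gb)
    moreover have "cpos star (r * r)" unfolding cpos_def using r(1) by metis
    ultimately show ?thesis using cpos_mult[OF gpos] by simp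
  qed
  define m where "m = norm g + 1"
  have m: "m \<ge> 1" unfolding m_def by simp
  have upp: "cpos star (m *\<^sub>R 1 - g)"
  proof -
    define h where "h = (1/m) *\<^sub>R g"
    have "star h = h" unfolding h_def by (simp add: star_scaleR sg)
    moreover have "norm h \<le> 1" unfolding h_def m_def using frac_le1[OF norm_ge_zero[of g]]
      by simp
    ultimately obtain r where r: "star r = r" "r * r = 1 - h" using sqrt_exists by blast
    have "m *\<^sub>R 1 - g = m *\<^sub>R (r * r)" unfolding r h_def using m
      by (simp add: scaleR_diff_right)
    moreover have "cpos star (r * r)" unfolding cpos_def using r(1) by metis
    ultimately show ?thesis using cpos_scaleR[of m] m by simp
  qed
  show ?thesis
  proof (intro exI conjI allI)
    show "0 < A / k" using AB k by simp
    show "A / k \<le> B * m"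
    proof -
      have "A / k \<le> A" using AB k by (simp add: divide_le_eq)
      also have "A \<le> B * m" using AB m by (metis mult_left_mono mult.right_neutral order.trans less_imp_le)
      finally show ?thesis .
    qed
    fix x
    define z where "z = act g x - act (ip \<xi> x) \<xi>"
    have hz1: "ip z y = two_ip ip x y \<xi>" for y
      unfolding z_def two_ip_def ip_diff_left ip_act_left sg g_def[symmetric]
      using ip_sym[of x \<xi>] by (simp add: mult.commute)
    have hz2: "ip y z = two_ip ip y x \<xi>" for y
      unfolding z_def two_ip_def ip_diff_right ip_act_right g_def ..
    define T where "T = two_ip ip x x \<xi>"
    have z0': "two_ip ip x \<xi> \<xi> = 0" unfolding two_ip_def by (simp add: mult.commute)
    have z0: "ip z \<xi> = 0" unfolding hz1 by (rule z0')
    have zz: "ip z z = T * g"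
      by (subst (2) z_def) (simp add: ip_diff_right ip_act_right z0' hz1 T_def)
    have fun_eq: "(\<lambda>i. two_ip ip x (xs i) \<xi> * two_ip ip (xs i) x \<xi>) = (\<lambda>j. ip z (xs j) * ip (xs j) z)"
      by (simp add: hz1 hz2)
    define S where "S = (\<Sum>j. ip z (xs j) * ip (xs j) z)"
    from F[of z] have Fz: "summable (\<lambda>j. ip z (xs j) * ip (xs j) z)"
      "cpos star (S - A *\<^sub>R (T * g))" "cpos star (B *\<^sub>R (T * g) - S)"
      unfolding cle_def zz S_def by auto
    have Tpos: "cpos star T"
    proof -
      have "T = ip z z * b" using zz gb by (simp add: mult.assoc)
      thus ?thesis using cpos_mult[OF ip_pos bpos] by simp
    qed
    show "summable (\<lambda>i. two_ip ip x (xs i) \<xi> * two_ip ip (xs i) x \<xi>)" using Fz(1) fun_eq by simp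
    have eq1: "S - (A / k) *\<^sub>R T = (S - A *\<^sub>R (T * g)) + A *\<^sub>R (T * (g - (1/k) *\<^sub>R 1))"
      by (simp add: algebra_simps)
    have pos1: "cpos star ((S - A *\<^sub>R (T * g)) + A *\<^sub>R (T * (g - (1/k) *\<^sub>R 1)))"
      by (intro cpos_add Fz cpos_scaleR cpos_mult Tpos low) (use AB in simp)
    show "cle star ((A / k) *\<^sub>R two_ip ip x x \<xi>) (\<Sum>i. two_ip ip x (xs i) \<xi> * two_ip ip (xs i) x \<xi>)"
      unfolding cle_def fun_eq S_def[symmetric] T_def[symmetric] eq1 by (rule pos1)
    have eq2: "(B * m) *\<^sub>R T - S = (B *\<^sub>R (T * g) - S) + B *\<^sub>R (T * (m *\<^sub>R 1 - g))"
      by (simp add: algebra_simps)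
    have pos2: "cpos star ((B *\<^sub>R (T * g) - S) + B *\<^sub>R (T * (m *\<^sub>R 1 - g)))"
      by (intro cpos_add Fz cpos_scaleR cpos_mult Tpos upp) (use AB in simp)
    show "cle star (\<Sum>i. two_ip ip x (xs i) \<xi> * two_ip ip (xs i) x \<xi>) ((B * m) *\<^sub>R two_ip ip x x \<xi>)"
      unfolding cle_def fun_eq S_def[symmetric] T_def[symmetric] eq2 by (rule pos2)
  qed
qed

end
theorem proposition2p2:
  fixes scaleC :: "complex \<Rightarrow> 'a::{comm_ring_1, real_normed_algebra_1, banach} \<Rightarrow> 'a"
    and star :: "'a \<Rightarrow> 'a"
    and act :: "'a \<Rightarrow> 'm::ab_group_add \<Rightarrow> 'm"
    and ip :: "'m \<Rightarrow> 'm \<Rightarrow> 'a"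
    and xs :: "nat \<Rightarrow> 'm"
    and \<xi> :: 'm
  assumes "hilbert_module scaleC star act ip"
    and "is_frame star ip xs"
    and "\<exists>b. ip \<xi> \<xi> * b = 1 \<and> b * ip \<xi> \<xi> = 1"
  shows "\<exists>C D::real. 0 < C \<and> C \<le> D \<and>
     (\<forall>x. summable (\<lambda>i. two_ip ip x (xs i) \<xi> * two_ip ip (xs i) x \<xi>) \<and>
          cle star (C *\<^sub>R two_ip ip x x \<xi>) (\<Sum>i. two_ip ip x (xs i) \<xi> * two_ip ip (xs i) x \<xi>) \<and>
          cle star (\<Sum>i. two_ip ip x (xs i) \<xi> * two_ip ip (xs i) x \<xi>) (D *\<^sub>R two_ip ip x x \<xi>))"
  proof -
  obtain b where "ip \<xi> \<xi> * b = 1" using assms(3) by blast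
  thus ?thesis using hilbert_module.main[OF assms(1) assms(2)] by blast
qed

end
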